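(* Let $k\ge 2$. If $G$ is a finite simple graph admitting a closed neighborhood balanced $k$-coloring, then the Cartesian product $G\,\square\, K_2$ admits a neighborhood-balanced $k$-coloring.
   Context: For a vertex $v$, $N(v)=\{u: uv\in E\}$ and $N[v]=N(v)\cup\{v\}$. A neighborhood-balanced $k$-coloring of a graph is a map $c:V\to\{1,\dots,k\}$ such that for every vertex $v$ the numbers $|\{u\in N(v): c(u)=i\}|$, $i=1,\dots,k$, are all equal; a closed neighborhood balanced $k$-coloring is defined likewise with $N[v]$ in place of $N(v)$. The Cartesian product $G\,\square\,H$ has vertex set $V(G)\times V(H)$, with $(g,h)$ adjacent to $(g',h')$ iff ($g=g'$ and $hh'\in E(H)$) or ($h=h'$ and $gg'\in E(G)$). *)

theory Defs
  imports Main
begin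

definition simple_graph :: "'a set \<Rightarrow> ('a \<Rightarrow> 'a \<Rightarrow> bool) \<Rightarrow> bool" where
  "simple_graph V E \<longleftrightarrow> finite V \<and>
     (\<forall>u v. E u v \<longrightarrow> u \<in> V \<and> v \<in> V) \<and>
     (\<forall>u v. E u v \<longrightarrow> E v u) \<and>
     (\<forall>v. \<not> E v v)"

definition open_nbhd :: "'a set \<Rightarrow> ('a \<Rightarrow> 'a \<Rightarrow> bool) \<Rightarrow> 'a \<Rightarrow> 'a set" where
  "open_nbhd V E v = {u \<in> V. E u v}"

definition closed_nbhd :: "'a set \<Rightarrow> ('a \<Rightarrow> 'a \<Rightarrow> bool) \<Rightarrow> 'a \<Rightarrow> 'a set" where
  "closed_nbhd V E v = insert v (open_nbhd V E v)"

definition balanced_wrt :: "'a set \<Rightarrow> ('a \<Rightarrow> 'a set) \<Rightarrow> nat \<Rightarrow> ('a \<Rightarrow> nat) \<Rightarrow> bool" where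
  "balanced_wrt V N k c \<longleftrightarrow> (\<forall>v\<in>V. c v \<in> {1..k}) \<and>
     (\<forall>v\<in>V. \<forall>i\<in>{1..k}. \<forall>j\<in>{1..k}.
        card {u \<in> N v. c u = i} = card {u \<in> N v. c u = j})"

definition nb_balanced_coloring :: "'a set \<Rightarrow> ('a \<Rightarrow> 'a \<Rightarrow> bool) \<Rightarrow> nat \<Rightarrow> ('a \<Rightarrow> nat) \<Rightarrow> bool" where
  "nb_balanced_coloring V E k c \<longleftrightarrow> balanced_wrt V (open_nbhd V E) k c"

definition closed_nb_balanced_coloring :: "'a set \<Rightarrow> ('a \<Rightarrow> 'a \<Rightarrow> bool) \<Rightarrow> nat \<Rightarrow> ('a \<Rightarrow> nat) \<Rightarrow> bool" where
  "closed_nb_balanced_coloring V E k c \<longleftrightarrow> balanced_wrt V (closed_nbhd V E) k c"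

definition cart_edges :: "('a \<Rightarrow> 'a \<Rightarrow> bool) \<Rightarrow> ('b \<Rightarrow> 'b \<Rightarrow> bool) \<Rightarrow> ('a \<times> 'b) \<Rightarrow> ('a \<times> 'b) \<Rightarrow> bool" where
  "cart_edges EG EH = (\<lambda>(g, h) (g', h'). (g = g' \<and> EH h h') \<or> (h = h' \<and> EG g g'))"

definition K2_verts :: "bool set" where "K2_verts = UNIV"
definition K2_edges :: "bool \<Rightarrow> bool \<Rightarrow> bool" where "K2_edges a b \<longleftrightarrow> a \<noteq> b"

end

theory Submission
  imports Defs
begin

lemma nbhd_eq:
  assumes sg: "simple_graph V E" and v: "v \<in> V"
  shows "{u \<in> open_nbhd (V \<times> K2_verts) (cart_edges E K2_edges) (v, b). c (fst u) = i}
       = (\<lambda>w. (w, if w = v then \<not> b else b)) ` {w \<in> closed_nbhd V E v. c w = i}"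
proof -
  have irr: "\<not> E v v" using sg by (simp add: simple_graph_def)
  show ?thesis
    using v irr
    by (auto simp: open_nbhd_def closed_nbhd_def cart_edges_def K2_verts_def K2_edges_def image_iff
        split: if_splits)
qed

theorem theorem2p19:
  fixes V :: "'a set" and E :: "'a \<Rightarrow> 'a \<Rightarrow> bool" and k :: nat
  assumes "k \<ge> 2"
    and "simple_graph V E"
    and "\<exists>c. closed_nb_balanced_coloring V E k c"
  shows "\<exists>c. nb_balanced_coloring (V \<times> K2_verts) (cart_edges E K2_edges) k c"
proof -
  obtain c where c: "closed_nb_balanced_coloring V E k c" using assms(3) by blast
  have cardeq: "card {u \<in> open_nbhd (V \<times> K2_verts) (cart_edges E K2_edges) (v, b). c (fst u) = i}
      = card {w \<in> closed_nbhd V E v. c w = i}" if "v \<in> V" for v b i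
  proof -
    have "inj_on (\<lambda>w. (w, if w = v then \<not> b else b)) {w \<in> closed_nbhd V E v. c w = i}"
      by (rule inj_onI) auto
    then show ?thesis unfolding nbhd_eq[OF assms(2) that, of b c i] by (rule card_image)
  qed
  have "nb_balanced_coloring (V \<times> K2_verts) (cart_edges E K2_edges) k (\<lambda>u. c (fst u))"
    unfolding nb_balanced_coloring_def balanced_wrt_def
  proof (intro conjI ballI)
    fix x assume "x \<in> V \<times> K2_verts"
    then show "c (fst x) \<in> {1..k}"
      using c unfolding closed_nb_balanced_coloring_def balanced_wrt_def by auto
  next
    fix x i j assume x: "x \<in> V \<times> K2_verts" and ij: "i \<in> {1..k}" "j \<in> {1..k}"
    obtain v b where xv: "x = (v, b)" and v: "v \<in> V" using x by auto
    have "card {w \<in> closed_nbhd V E v. c w = i} = card {w \<in> closed_nbhd V E v. c w = j}"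
      using c v ij unfolding closed_nb_balanced_coloring_def balanced_wrt_def by blast
    then show "card {u \<in> open_nbhd (V \<times> K2_verts) (cart_edges E K2_edges) x. c (fst u) = i} =
          card {u \<in> open_nbhd (V \<times> K2_verts) (cart_edges E K2_edges) x. c (fst u) = j}"
      unfolding xv cardeq[OF v] .
  qed
  then show ?thesis by blast
qed

end
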